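(* Let $k\ge 2$, $n\ge1$, and let $L_n$, $\varphi$ and the weight $w$ be as in the context. For all $\mathbf a,\mathbf b\in L_n$ with $a_1=0$ and $b_1=k-1$, we have $w(\varphi(\mathbf a))<w(\varphi(\mathbf b))$.
   Context: $E=\{0,\dots,k-1\}$. For $\mathbf a\in E^m$, $w(\mathbf a)=a_1+\dots+a_m$, and $\mathcal B_t=\{\mathbf a\in E^n: w(\mathbf a)=t\}$. Let $g=\lfloor n(k-1)/2\rfloor$ and $C_i=\{\mathbf a\in E^n: a_1=i\}$. Define $L_n=(\mathcal B_0\cup\dots\cup\mathcal B_g)\cap(C_0\cup C_{k-1})$ if $n(k-1)$ is odd, and $L_n=((\mathcal B_0\cup\dots\cup\mathcal B_{g-1})\cap(C_0\cup C_{k-1}))\cup(\mathcal B_g\cap C_0)$ if $n(k-1)$ is even. For $a\in E$ let $\overline a=k-1-a$. Define $\varphi:L_n\to E^{n-1}$ by $\varphi(a_1,\dots,a_n)=(a_2,\dots,a_n)$ if $a_1=0$ and $\varphi(a_1,\dots,a_n)=(\overline{a}_2,\dots,\overline{a}_n)$ if $a_1=k-1$. *)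

theory Defs
  imports Main
begin

text \<open>Words in E^m, E = {0,...,k-1}, are lists of length m with entries < k.
  The coordinate a_1 is a ! 0.\<close>

definition words :: "nat \<Rightarrow> nat \<Rightarrow> nat list set" where
  "words k m = {a. length a = m \<and> (\<forall>x\<in>set a. x < k)}"

definition wt :: "nat list \<Rightarrow> nat" where
  "wt a = sum_list a"

definition Blev :: "nat \<Rightarrow> nat \<Rightarrow> nat \<Rightarrow> nat list set" where
  "Blev k n t = {a \<in> words k n. wt a = t}"

definition gmid :: "nat \<Rightarrow> nat \<Rightarrow> nat" where
  "gmid k n = (n * (k - 1)) div 2"

definition Cfst :: "nat \<Rightarrow> nat \<Rightarrow> nat \<Rightarrow> nat list set" where
  "Cfst k n i = {a \<in> words k n. a ! 0 = i}"

definition Lset :: "nat \<Rightarrow> nat \<Rightarrow> nat list set" where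
  "Lset k n =
    (if odd (n * (k - 1))
     then (\<Union>t\<in>{0..gmid k n}. Blev k n t) \<inter> (Cfst k n 0 \<union> Cfst k n (k - 1))
     else ((\<Union>t\<in>{0..<gmid k n}. Blev k n t) \<inter> (Cfst k n 0 \<union> Cfst k n (k - 1)))
          \<union> (Blev k n (gmid k n) \<inter> Cfst k n 0))"

definition bar :: "nat \<Rightarrow> nat \<Rightarrow> nat" where
  "bar k a = k - 1 - a"

definition phi :: "nat \<Rightarrow> nat list \<Rightarrow> nat list" where
  "phi k a = (if a ! 0 = 0 then tl a else map (bar k) (tl a))"

end

theory Submission
  imports Defs
begin

lemma barsum: "\<forall>x\<in>set xs. x < k \<Longrightarrow>
  sum_list (map (bar k) xs) + sum_list xs = length xs * (k - 1)"
  by (induction xs) (auto simp: bar_def)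

lemma hdsum: "xs \<noteq> [] \<Longrightarrow> sum_list xs = xs ! 0 + sum_list (tl xs)"
  by (cases xs) auto

theorem lemma1:
  fixes k n :: nat and a b :: "nat list"
  assumes "k \<ge> 2" and "n \<ge> 1"
    and "a \<in> Lset k n" and "b \<in> Lset k n"
    and "a ! 0 = 0" and "b ! 0 = k - 1"
  shows "wt (phi k a) < wt (phi k b)"
proof -
  have K: "k - 1 \<noteq> 0" using assms(1) by simp
  have aw: "a \<in> words k n" and bw: "b \<in> words k n"
    using assms(3,4) by (auto simp: Lset_def Blev_def split: if_splits)
  have wa: "wt a \<le> gmid k n"
    using assms(3) by (auto simp: Lset_def Blev_def split: if_splits)
  have wb: "if odd (n * (k - 1)) then wt b \<le> gmid k n else wt b < gmid k n"
    using assms(4) assms(6) K by (auto simp: Lset_def Blev_def Cfst_def split: if_splits)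
  have sum2: "wt a + wt b < n * (k - 1)"
  proof -
    define N where "N = n * (k - 1)"
    have d: "2 * (N div 2) + N mod 2 = N" by simp
    show ?thesis
    proof (cases "odd N")
      case True
      then have "N mod 2 = 1" by (simp add: odd_iff_mod_2_eq_one)
      moreover have "wt b \<le> N div 2" using wb True unfolding gmid_def N_def[symmetric] by simp
      ultimately show ?thesis using d wa unfolding gmid_def N_def[symmetric] by linarith
    next
      case False
      then have "N mod 2 = 0" by simp
      moreover have "wt b < N div 2" using wb False unfolding gmid_def N_def[symmetric] by simp
      ultimately show ?thesis using d wa unfolding gmid_def N_def[symmetric] by linarith
    qed
  qed
  have ne: "a \<noteq> []" "b \<noteq> []" using aw bw assms(2) by (auto simp: words_def)
  have pa: "wt (phi k a) = wt a"
    using assms(5) hdsum[OF ne(1)] by (simp add: phi_def wt_def)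
  have bb: "\<forall>x\<in>set (tl b). x < k" using bw ne(2)
    by (cases b) (auto simp: words_def)
  have lb: "length (tl b) = n - 1" using bw by (simp add: words_def)
  have pb: "wt (phi k b) + (wt b - (k - 1)) = (n - 1) * (k - 1)"
    and wbge: "wt b \<ge> k - 1"
    using assms(6) K barsum[OF bb] lb hdsum[OF ne(2)] by (auto simp: phi_def wt_def)
  have "n * (k - 1) = (n - 1) * (k - 1) + (k - 1)" using assms(2)
    by (metis Suc_diff_1 add.commute le_eq_less_or_eq less_one mult_Suc not_less0 zero_less_iff_neq_zero)
  then show ?thesis using pa pb wbge sum2 by linarith
qed

end
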